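(* Let $n,d\ge2$, $g(s)=((n+1)s-1)^{d-1}-(-1)^{d-1}$, and for $\mathbf s=(s_1,\ldots,s_{n-1})\in\mathbb R^{n-1}$ let $$\mathbf h(\mathbf s)=\Big(s_k\Big(g\big(1-\textstyle\sum_{j=1}^{n-1}s_j\big)+\sum_{j=1}^{n-1}g(s_j)\Big)-g(s_k)\Big)_{1\le k\le n-1}.$$ Write $s_n:=1-\sum_{k=1}^{n-1}s_k$ and $\Delta_{n-1}=\{\mathbf s\in\mathbb R^{n-1}:s_k\ge0,\ \sum_{k=1}^{n-1}s_k\le1\}$. (i) $\mathbf h(\mathbf s)=\mathbf 0$ for every $\mathbf s\in\Delta_{n-1}$ for which there is a nonempty $K\subseteq\{1,\ldots,n\}$ with $s_k=\frac1{|K|}$ for $k\in K$ and $s_k=0$ for $k\in\{1,\ldots,n\}\setminus K$. (ii) If $d=2$, $\mathbf h$ vanishes identically. (iii) If $d$ is odd, $\mathbf h$ has no zeros in $\Delta_{n-1}$ other than those in (i). (iv) If $d\ge4$ is even, $\mathbf h$ vanishes at $\mathbf s\in\Delta_{n-1}$ if and only if there exist disjoint $K_1,K_2\subseteq\{1,\ldots,n\}$, not both empty, such that one of the following holds: (a) $K_1=\emptyset$, $\frac1{|K_2|}>s^*$, $s_k=\frac1{|K_2|}$ for $k\in K_2$ and $s_k=0$ otherwise; (b) $K_2=\emptyset$, $\frac1{|K_1|}\le s^*$, $s_k=\frac1{|K_1|}$ for $k\in K_1$ and $s_k=0$ otherwise; (c) $K_1,K_2\ne\emptyset$, $s_k=a$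 for $k\in K_1$, $s_k=b$ for $k\in K_2$, $s_k=0$ for $k\notin K_1\cup K_2$, where $a\in(0,s^* )$ is a zero of the polynomial $r(s)=\frac{g(s)}{s}-\frac{|K_2|\,g\big(\frac{1-|K_1|s}{|K_2|}\big)}{1-|K_1|s}$ and $b=\frac{1-|K_1|a}{|K_2|}\in(s^*,1]$.
   Context: For $d\ge4$ even, $s^*$ denotes the unique point $s^*\in[\frac1n,\frac2{n+1})$ such that the polynomial $p(s)=g(s)/s$ is strictly decreasing on $[0,s^*]$ and strictly increasing on $[s^*,\infty)$ (its existence is part of a preceding lemma). *)

theory Defs
  imports Complex_Main
begin

definition gfun :: "nat \<Rightarrow> nat \<Rightarrow> real \<Rightarrow> real" where
  "gfun n d s = ((real n + 1) * s - 1) ^ (d - 1) - (-1) ^ (d - 1)"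

text \<open>The polynomial p(s) = g(s)/s (g(0) = 0), written out via the binomial expansion
  of g, so that it is also defined at s = 0.\<close>
definition pfun :: "nat \<Rightarrow> nat \<Rightarrow> real \<Rightarrow> real" where
  "pfun n d s = (\<Sum>i=1..d-1. real ((d - 1) choose i) * (real n + 1) ^ i
                    * (-1) ^ (d - 1 - i) * s ^ (i - 1))"

definition sstar :: "nat \<Rightarrow> nat \<Rightarrow> real" where
  "sstar n d = (THE t. 1 / real n \<le> t \<and> t < 2 / (real n + 1)
      \<and> strict_antimono_on {0..t} (pfun n d) \<and> strict_mono_on {t..} (pfun n d))"

text \<open>Points s = (s_1,...,s_{n-1}) are represented as functions nat => real, only the
  values at 1..n-1 matter.\<close>
definition hcomp :: "nat \<Rightarrow> nat \<Rightarrow> (nat \<Rightarrow> real) \<Rightarrow> nat \<Rightarrow> real" where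
  "hcomp n d s k = s k * (gfun n d (1 - (\<Sum>j=1..n-1. s j)) + (\<Sum>j=1..n-1. gfun n d (s j)))
                   - gfun n d (s k)"

definition hzero :: "nat \<Rightarrow> nat \<Rightarrow> (nat \<Rightarrow> real) \<Rightarrow> bool" where
  "hzero n d s \<longleftrightarrow> (\<forall>k\<in>{1..n-1}. hcomp n d s k = 0)"

definition sext :: "nat \<Rightarrow> (nat \<Rightarrow> real) \<Rightarrow> nat \<Rightarrow> real" where
  "sext n s k = (if k = n then 1 - (\<Sum>j=1..n-1. s j) else s k)"

definition in_simplex :: "nat \<Rightarrow> (nat \<Rightarrow> real) \<Rightarrow> bool" where
  "in_simplex n s \<longleftrightarrow> (\<forall>k\<in>{1..n-1}. 0 \<le> s k) \<and> (\<Sum>k=1..n-1. s k) \<le> 1"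

definition uniform_on :: "nat \<Rightarrow> (nat \<Rightarrow> real) \<Rightarrow> nat set \<Rightarrow> bool" where
  "uniform_on n s K \<longleftrightarrow> (\<forall>k\<in>K. sext n s k = 1 / real (card K))
      \<and> (\<forall>k\<in>{1..n} - K. sext n s k = 0)"

end

theory Submission
  imports Defs
begin

lemma pfun_g: "s * pfun n d s = gfun n d s"
proof -
  define c where "c = real n + 1"
  define e where "e = d - 1"
  have "gfun n d s = (c*s + (-1))^e - (-1)^e" by (simp add: gfun_def c_def e_def)
  also have "(c*s + (-1))^e = (\<Sum>k\<le>e. of_nat (e choose k) * (c*s)^k * (-1)^(e-k))"
    by (rule binomial_ring)
  also have "\<dots> = (\<Sum>k\<in>{0..e}. of_nat (e choose k) * (c*s)^k * (-1)^(e-k))"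
    by (simp add: atMost_atLeast0)
  also have "\<dots> = (-1)^e + (\<Sum>k\<in>{1..e}. of_nat (e choose k) * (c*s)^k * (-1)^(e-k))"
    by (subst sum.atLeast_Suc_atMost) auto
  finally have "gfun n d s = (\<Sum>k\<in>{1..e}. of_nat (e choose k) * (c*s)^k * (-1)^(e-k))" by simp
  also have "\<dots> = s * pfun n d s"
    unfolding pfun_def sum_distrib_left c_def[symmetric] e_def[symmetric]
  proof (rule sum.cong)
    fix k assume "k \<in> {1..e}"
    then have "s^k = s * s^(k-1)" by (cases k) auto
    then show "of_nat (e choose k) * (c*s)^k * (-1)^(e-k) = s * (real (e choose k) * c ^ k * (- 1) ^ (e - k) * s ^ (k - 1))"
      by (simp add: power_mult_distrib)
  qed simp
  finally show ?thesis by simp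
qed

lemma pfun_cont: "continuous_on A (pfun n d)"
  unfolding pfun_def by (intro continuous_intros)

lemma pfun_isCont: "isCont (pfun n d) x"
  unfolding pfun_def by (intro continuous_intros)

definition Nf :: "nat \<Rightarrow> real \<Rightarrow> real" where
  "Nf e x = (real e - 1) * x^e + real e * x^(e-1) + (-1)^e"

lemma deriv_pfun:
  assumes "s > 0" "d \<ge> 2"
  shows "(pfun n d has_real_derivative (Nf (d-1) ((real n + 1)*s - 1) / s^2)) (at s)"
proof -
  define c where "c = real n + 1"
  define e where "e = d - 1"
  have e1: "e \<ge> 1" using assms by (simp add: e_def)
  have gd: "((\<lambda>y. gfun n d y) has_real_derivative (real e * (c*s-1)^(e-1) * c)) (at s)"
    unfolding gfun_def c_def[symmetric] e_def[symmetric]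
    by (auto intro!: derivative_eq_intros)
  have q: "((\<lambda>y. gfun n d y / y) has_real_derivative
      ((real e * (c*s-1)^(e-1) * c) * s - 1 * gfun n d s) / s^Suc (Suc 0)) (at s)"
    by (rule DERIV_quotient[OF gd DERIV_ident]) (use assms in auto)
  have eq: "(real e * (c*s-1)^(e-1) * c) * s - 1 * gfun n d s = Nf e (c*s-1)"
  proof -
    define x where "x = c*s-1"
    have cs: "c*s = x + 1" by (simp add: x_def)
    have xe: "x^e = x * x^(e-1)" using e1 by (cases e) auto
    have "(real e * (c*s-1)^(e-1) * c) * s - 1 * gfun n d s
        = real e * x^(e-1) * (c*s) - (x^e - (-1)^e)"
      unfolding gfun_def c_def[symmetric] e_def[symmetric] x_def[symmetric]
      by (simp add: algebra_simps)
    also have "\<dots> = real e * x^(e-1) * (x+1) - (x^e - (-1)^e)" by (simp only: cs)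
    also have "\<dots> = Nf e x" unfolding Nf_def xe by (simp add: algebra_simps)
    finally show ?thesis by (simp add: x_def)
  qed
  have q2: "((\<lambda>y. gfun n d y / y) has_real_derivative (Nf (d-1) ((real n + 1)*s - 1) / s^2)) (at s)"
    using q unfolding eq by (simp add: c_def e_def power2_eq_square)
  show ?thesis
  proof (rule has_field_derivative_transform_within_open[OF q2, of "{0<..}"])
    fix x :: real assume "x \<in> {0<..}"
    then show "gfun n d x / x = pfun n d x" using pfun_g[of x n d] by (auto simp: field_simps)
  qed (use assms in auto)
qed

lemma Nf_deriv:
  assumes "e \<ge> 2"
  shows "(Nf e has_real_derivative (real e * (real e - 1) * x^(e-2) * (x+1))) (at x)"
proof -
  have h: "(Nf e has_real_derivative ((real e - 1) * (real e * x^(e-1)) + real e * (real (e-1) * x^(e-1-1)))) (at x)"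
    unfolding Nf_def by (rule derivative_eq_intros refl)+ simp
  have x1: "x^(e-1) = x * x^(e-2)" proof -
    have "e-1 = Suc (e-2)" using assms by simp
    then show ?thesis by simp
  qed
  have "real (e-1) = real e - 1" using assms by simp
  then show ?thesis using h unfolding x1 by (simp add: algebra_simps numeral_2_eq_2)
qed
lemma Nf_cont: "continuous_on A (Nf e)"
  unfolding Nf_def by (intro continuous_intros)

lemma Nf_m1: "e \<ge> 1 \<Longrightarrow> Nf e (-1) = 0"
  unfolding Nf_def by (cases e) (auto simp: algebra_simps)

lemma Nf_even_pos:
  assumes "even e" "e \<ge> 2" "x > -1"
  shows "Nf e x > 0"
proof (cases "x \<ge> 0")
  case True
  then have "0 \<le> (real e - 1) * x^e" "0 \<le> real e * x^(e-1)" using assms by auto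
  then show ?thesis using assms by (simp add: Nf_def)
next
  case False
  have "Nf e (-1) < Nf e x"
  proof (rule DERIV_pos_imp_increasing_open[of "-1" x "Nf e"])
    show "-1 < x" by fact
    fix y :: real assume y: "-1 < y" "y < x"
    have "even (e-2)" using assms by auto
    then have "y^(e-2) > 0" using y False by (simp add: zero_less_power_eq)
    moreover have "real e * (real e - 1) > 0" using assms by simp
    ultimately have "real e * (real e - 1) * y^(e-2) * (y+1) > 0" using y by simp
    then show "\<exists>z. DERIV (Nf e) y :> z \<and> z > 0" using Nf_deriv[OF assms(2)] by blast
  qed (rule Nf_cont)
  then show ?thesis using Nf_m1[of e] assms by simp
qed

lemma Nf_odd_neg:
  assumes "odd e" "e \<ge> 2" "x > -1" "x \<le> 0"
  shows "Nf e x < 0"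
proof -
  have "Nf e x < Nf e (-1)"
  proof (rule DERIV_neg_imp_decreasing_open[of "-1" x "Nf e"])
    show "-1 < x" by fact
    fix y :: real assume y: "-1 < y" "y < x"
    have "odd (e-2)" using assms by auto
    then have "y^(e-2) < 0" using y assms by (simp add: power_less_zero_eq)
    moreover have "real e * (real e - 1) > 0" using assms by simp
    ultimately have "real e * (real e - 1) * y^(e-2) * (y+1) < 0" using y
      by (simp add: mult_pos_neg mult_neg_pos)
    then show "\<exists>z. DERIV (Nf e) y :> z \<and> z < 0" using Nf_deriv[OF assms(2)] by blast
  qed (rule Nf_cont)
  then show ?thesis using Nf_m1[of e] assms by simp
qed

lemma Nf_mono_pos:
  assumes "e \<ge> 2" "0 \<le> x" "x < y"
  shows "Nf e x < Nf e y"
proof -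
  have "x^e \<le> y^e" using assms by (intro power_mono) auto
  then have a: "(real e - 1) * x^e \<le> (real e - 1) * y^e" using assms by (intro mult_left_mono) auto
  have "x^(e-1) < y^(e-1)" using assms by (intro power_strict_mono) auto
  then have b: "real e * x^(e-1) < real e * y^(e-1)" using assms by simp
  show ?thesis using a b by (simp add: Nf_def)
qed

lemma three_le_pow: "e \<ge> 3 \<Longrightarrow> 3 * e \<le> 2^e + (1::nat)"
proof (induction e rule: dec_induct)
  case base then show ?case by simp
next
  case (step m) then show ?case by simp
qed

lemma Nf_half:
  assumes "odd e" "e \<ge> 3"
  shows "Nf e (1/2) \<le> 0"
proof -
  have "real (3*e) \<le> real (2^e + 1)" using three_le_pow[OF assms(2)] by linarith
  then have h: "3 * real e \<le> 2^e + 1" by simp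
  have p: "(1/2::real)^e = 1/2^e" by (simp add: power_divide)
  have p2: "(1/2::real)^(e-1) = 2/2^e" using assms by (cases e) (auto simp: power_divide)
  have "Nf e (1/2) = ((real e - 1) + 2 * real e) / 2^e - 1"
    unfolding Nf_def p p2 using assms by (simp add: field_simps)
  also have "\<dots> \<le> 0" using h by (simp add: field_simps)
  finally show ?thesis .
qed

lemma Nf_root:
  assumes "odd e" "e \<ge> 3"
  shows "\<exists>x0. 1/2 \<le> x0 \<and> x0 < 1 \<and> (\<forall>x. -1 < x \<and> x < x0 \<longrightarrow> Nf e x < 0)
              \<and> (\<forall>x. x0 < x \<longrightarrow> Nf e x > 0)"
proof -
  have n1: "Nf e 1 > 0" using assms by (simp add: Nf_def)
  obtain x0 where x0: "1/2 \<le> x0" "x0 \<le> 1" "Nf e x0 = 0"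
  proof -
    have c: "\<forall>x. 1/2 \<le> x \<and> x \<le> 1 \<longrightarrow> isCont (Nf e) x"
      unfolding Nf_def by (intro allI impI continuous_intros)
    show ?thesis using IVT[of "Nf e" "1/2" 0 1, OF Nf_half[OF assms] _ _ c] n1 that by force
  qed
  have "x0 \<noteq> 1" using n1 x0 by auto
  moreover have "\<forall>x. -1 < x \<and> x < x0 \<longrightarrow> Nf e x < 0"
  proof (intro allI impI)
    fix x :: real assume x: "-1 < x \<and> x < x0"
    show "Nf e x < 0"
    proof (cases "x \<le> 0")
      case True then show ?thesis using Nf_odd_neg[of e x] assms x by auto
    next
      case False then show ?thesis using Nf_mono_pos[of e x x0] assms x x0 by auto
    qed
  qed
  moreover have "\<forall>x. x0 < x \<longrightarrow> Nf e x > 0"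
    using Nf_mono_pos[of e x0] assms x0 by auto
  ultimately show ?thesis using x0 by (intro exI[of _ x0]) auto
qed

lemma sstar_props:
  assumes "n \<ge> 2" "even d" "d \<ge> 4"
  shows "1 / real n \<le> sstar n d \<and> sstar n d < 2 / (real n + 1)
      \<and> strict_antimono_on {0..sstar n d} (pfun n d) \<and> strict_mono_on {sstar n d..} (pfun n d)"
proof -
  define P where "P = (\<lambda>t. 1 / real n \<le> t \<and> t < 2 / (real n + 1)
      \<and> strict_antimono_on {0..t} (pfun n d) \<and> strict_mono_on {t..} (pfun n d))"
  define c where "c = real n + 1"
  have cpos: "c > 0" by (simp add: c_def)
  have d2: "d \<ge> 2" using assms by simp
  obtain x0 where x0: "1/2 \<le> x0" "x0 < 1" "\<forall>x. -1 < x \<and> x < x0 \<longrightarrow> Nf (d-1) x < 0"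
      "\<forall>x. x0 < x \<longrightarrow> Nf (d-1) x > 0"
  proof -
    have "odd (d-1)" "d - 1 \<ge> 3" using assms by auto
    from Nf_root[OF this] show ?thesis using that by blast
  qed
  define t where "t = (x0 + 1) / c"
  have tpos: "t > 0" using x0 cpos by (simp add: t_def)
  have "P t"
    unfolding P_def
  proof (intro conjI)
    have "1 / real n \<le> 1/2" using assms by (simp add: field_simps)
    then have "1 / real n \<le> x0" using x0 by simp
    then have "(1 + 1 / real n) / c \<le> t" unfolding t_def using cpos by (simp add: divide_right_mono)
    moreover have "(1 + 1 / real n) / c = 1 / real n"
    proof -
      have "real n > 0" using assms by simp
      then have "real n + 1 \<noteq> 0" by simp
      with \<open>real n > 0\<close> show ?thesis by (simp add: c_def divide_simps)
    qed
    ultimately show "1 / real n \<le> t" by simp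
    show "t < 2 / (real n + 1)" unfolding t_def c_def[symmetric] using x0 cpos
      by (simp add: divide_strict_right_mono)
    show "strict_antimono_on {0..t} (pfun n d)"
    proof (rule monotone_onI)
      fix u v assume uv: "u \<in> {0..t}" "v \<in> {0..t}" "u < v"
      show "pfun n d v < pfun n d u"
      proof (rule DERIV_neg_imp_decreasing_open[of u v "pfun n d"])
        fix y assume y: "u < y" "y < v"
        have "y > 0" "y < t" using y uv by auto
        then have "-1 < c*y - 1" "c*y - 1 < x0" using cpos
          by (auto simp: t_def field_simps)
        then have "Nf (d-1) (c*y-1) / y^2 < 0" using x0 \<open>y > 0\<close> by (simp add: divide_neg_pos)
        then show "\<exists>z. DERIV (pfun n d) y :> z \<and> z < 0"
          using deriv_pfun[OF \<open>y > 0\<close> d2, of n] unfolding c_def by blast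
      qed (use uv pfun_cont in auto)
    qed
    show "strict_mono_on {t..} (pfun n d)"
    proof (rule monotone_onI)
      fix u v assume uv: "u \<in> {t..}" "v \<in> {t..}" "u < v"
      show "pfun n d u < pfun n d v"
      proof (rule DERIV_pos_imp_increasing_open[of u v "pfun n d"])
        fix y assume y: "u < y" "y < v"
        have "y > t" using y uv by auto
        then have "y > 0" using tpos by simp
        have "c*y - 1 > x0" using \<open>y > t\<close> cpos by (auto simp: t_def field_simps)
        then have "Nf (d-1) (c*y-1) / y^2 > 0" using x0 \<open>y > 0\<close> by simp
        then show "\<exists>z. DERIV (pfun n d) y :> z \<and> z > 0"
          using deriv_pfun[OF \<open>y > 0\<close> d2, of n] unfolding c_def by blast
      qed (use uv pfun_cont in auto)
    qed
  qed
  moreover have "t' = t" if "P t'" for t'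
  proof (rule ccontr)
    assume ne: "t' \<noteq> t"
    have g: "\<And>a b. P a \<Longrightarrow> P b \<Longrightarrow> a < b \<Longrightarrow> False"
    proof -
      fix a b assume Pa: "P a" and Pb: "P b" and ab: "a < b"
      have a0: "0 \<le> a" using Pa assms unfolding P_def by (smt (verit) divide_nonneg_nonneg of_nat_0_le_iff)
      have "pfun n d b < pfun n d a"
        using Pb a0 ab unfolding P_def monotone_on_def by auto
      moreover have "pfun n d a < pfun n d b"
        using Pa ab unfolding P_def monotone_on_def by auto
      ultimately show False by simp
    qed
    show False using g[OF that \<open>P t\<close>] g[OF \<open>P t\<close> that] ne by linarith
  qed
  ultimately have "P (sstar n d)" unfolding sstar_def P_def[symmetric]
    by (metis theI)
  then show ?thesis unfolding P_def .
qed

lemma pfun_odd_mono: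
  assumes "odd d" "d \<ge> 2"
  shows "strict_mono_on {0..} (pfun n d)"
proof (rule monotone_onI)
  fix u v :: real assume uv: "u \<in> {0..}" "v \<in> {0..}" "u < v"
  have d3: "d \<ge> 3" using assms by presburger
  show "pfun n d u < pfun n d v"
  proof (rule DERIV_pos_imp_increasing_open[of u v "pfun n d"])
    fix y assume y: "u < y" "y < v"
    then have "y > 0" using uv by auto
    have "even (d-1)" "d-1 \<ge> 2" using assms d3 by auto
    moreover have "(real n + 1) * y - 1 > -1" using \<open>y > 0\<close> by simp
    ultimately have "Nf (d-1) ((real n + 1) * y - 1) > 0" by (rule Nf_even_pos)
    then have "Nf (d-1) ((real n + 1) * y - 1) / y^2 > 0" using \<open>y > 0\<close> by simp
    then show "\<exists>z. DERIV (pfun n d) y :> z \<and> z > 0"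
      using deriv_pfun[OF \<open>y > 0\<close> assms(2), of n] by blast
  qed (use uv pfun_cont in auto)
qed

lemma inj_mono: "strict_mono_on A (f::real\<Rightarrow>real) \<Longrightarrow> x \<in> A \<Longrightarrow> y \<in> A \<Longrightarrow> f x = f y \<Longrightarrow> x = y"
  by (metis linorder_neq_iff monotone_onD order_less_irrefl)

lemma inj_antimono: "strict_antimono_on A (f::real\<Rightarrow>real) \<Longrightarrow> x \<in> A \<Longrightarrow> y \<in> A \<Longrightarrow> f x = f y \<Longrightarrow> x = y"
  by (metis linorder_neq_iff monotone_onD order_less_irrefl)

lemma sext_sum:
  assumes "n \<ge> 1"
  shows "(\<Sum>k=1..n. sext n s k) = 1"
proof -
  have e: "{1..n} = insert n {1..n-1}" using assms by auto
  have "(\<Sum>k=1..n-1. sext n s k) = (\<Sum>k=1..n-1. s k)"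
    by (rule sum.cong) (auto simp: sext_def)
  then show ?thesis unfolding e using assms by (simp add: sext_def)
qed

lemma sext_gsum:
  assumes "n \<ge> 1"
  shows "(\<Sum>k=1..n. F (sext n s k)) = F (1 - (\<Sum>j=1..n-1. s j)) + (\<Sum>j=1..n-1. F (s j))"
proof -
  have e: "{1..n} = insert n {1..n-1}" using assms by auto
  have "(\<Sum>k=1..n-1. F (sext n s k)) = (\<Sum>k=1..n-1. F (s k))"
    by (rule sum.cong) (auto simp: sext_def)
  then show ?thesis unfolding e using assms by (simp add: sext_def)
qed

lemma hzero_iff:
  assumes "n \<ge> 2"
  shows "hzero n d s \<longleftrightarrow> (\<exists>L. \<forall>k\<in>{1..n}. sext n s k \<noteq> 0 \<longrightarrow> pfun n d (sext n s k) = L)"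
proof -
  define S where "S = sext n s"
  define G where "G = (\<Sum>k=1..n. gfun n d (S k))"
  have Sk: "S k = s k" if "k \<in> {1..n-1}" for k using that by (auto simp: S_def sext_def)
  have hc: "hcomp n d s k = s k * G - gfun n d (s k)" for k
    unfolding hcomp_def G_def S_def using sext_gsum[of n "gfun n d" s] assms by simp
  have gp: "gfun n d x = x * pfun n d x" for x using pfun_g[of x n d] by simp
  have sumS: "(\<Sum>k=1..n. S k) = 1" unfolding S_def using sext_sum assms by simp
  have e: "{1..n} = insert n {1..n-1}" using assms by auto
  show ?thesis
  proof
    assume hz: "hzero n d s"
    have A: "S k * G = gfun n d (S k)" if "k \<in> {1..n-1}" for k
      using hz that Sk[OF that] hc[of k] unfolding hzero_def by auto
    have "(\<Sum>k=1..n-1. S k * G - gfun n d (S k)) = 0" using A by simp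
    then have "(\<Sum>k=1..n-1. S k) * G - (\<Sum>k=1..n-1. gfun n d (S k)) = 0"
      by (simp add: sum_subtractf sum_distrib_right)
    moreover have "(\<Sum>k=1..n-1. S k) = 1 - S n" using sumS assms unfolding e by simp
    moreover have "(\<Sum>k=1..n-1. gfun n d (S k)) = G - gfun n d (S n)" using assms unfolding G_def e by simp
    ultimately have "(1 - S n) * G - (G - gfun n d (S n)) = 0" by simp
    then have B: "S n * G = gfun n d (S n)" by (simp add: algebra_simps)
    have "S k * G = gfun n d (S k)" if "k \<in> {1..n}" for k
      using A B that by (cases "k = n") auto
    then have "\<forall>k\<in>{1..n}. S k \<noteq> 0 \<longrightarrow> pfun n d (S k) = G"
      using gp by (metis mult_left_cancel)
    then show "\<exists>L. \<forall>k\<in>{1..n}. sext n s k \<noteq> 0 \<longrightarrow> pfun n d (sext n s k) = L"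
      unfolding S_def by blast
  next
    assume "\<exists>L. \<forall>k\<in>{1..n}. sext n s k \<noteq> 0 \<longrightarrow> pfun n d (sext n s k) = L"
    then obtain L where L: "\<forall>k\<in>{1..n}. S k \<noteq> 0 \<longrightarrow> pfun n d (S k) = L" unfolding S_def by blast
    have gL: "gfun n d (S k) = S k * L" if "k \<in> {1..n}" for k
      using L that gp[of "S k"] by (cases "S k = 0") auto
    have "G = (\<Sum>k=1..n. S k * L)" unfolding G_def using gL by (intro sum.cong) auto
    also have "\<dots> = L" using sumS by (simp add: sum_distrib_right[symmetric])
    finally have GL: "G = L" .
    show "hzero n d s" unfolding hzero_def
    proof
      fix k assume k: "k \<in> {1..n-1}"
      then have "k \<in> {1..n}" by auto
      then show "hcomp n d s k = 0" using hc[of k] gL[of k] Sk[OF k] GL by simp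
    qed
  qed
qed

lemma simplex_bounds:
  assumes "n \<ge> 2" "in_simplex n s" "k \<in> {1..n}"
  shows "0 \<le> sext n s k \<and> sext n s k \<le> 1"
proof -
  have nn: "\<forall>j\<in>{1..n}. 0 \<le> sext n s j"
    using assms(2) unfolding in_simplex_def sext_def by auto
  have "sext n s k \<le> (\<Sum>j=1..n. sext n s j)"
    by (rule member_le_sum) (use nn assms in auto)
  then show ?thesis using sext_sum[of n s] nn assms by auto
qed

lemma supp_sum:
  assumes "n \<ge> 2"
  shows "(\<Sum>k\<in>{k\<in>{1..n}. sext n s k \<noteq> 0}. sext n s k) = 1"
proof -
  have "(\<Sum>k\<in>{k\<in>{1..n}. sext n s k \<noteq> 0}. sext n s k) = (\<Sum>k=1..n. sext n s k)"
    by (rule sum.mono_neutral_left) auto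
  then show ?thesis using sext_sum[of n s] assms by simp
qed

lemma const_sum: "\<forall>k\<in>K. f k = (a::real) \<Longrightarrow> sum f K = real (card K) * a"
  by simp

lemma odd_case:
  assumes "n \<ge> 2" "d \<ge> 2" "odd d" "in_simplex n s" "hzero n d s"
  shows "\<exists>K. K \<noteq> {} \<and> K \<subseteq> {1..n} \<and> uniform_on n s K"
proof -
  obtain L where L: "\<forall>k\<in>{1..n}. sext n s k \<noteq> 0 \<longrightarrow> pfun n d (sext n s k) = L"
    using hzero_iff[OF assms(1)] assms(5) by blast
  define S where "S = {k\<in>{1..n}. sext n s k \<noteq> 0}"
  have fin: "finite S" unfolding S_def by simp
  have sum1: "sum (sext n s) S = 1" unfolding S_def using supp_sum[OF assms(1)] .
  then have "S \<noteq> {}" by auto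
  then obtain k0 where k0: "k0 \<in> S" by blast
  define a where "a = sext n s k0"
  have mono: "strict_mono_on {0..} (pfun n d)" using pfun_odd_mono assms by blast
  have eq: "\<forall>k\<in>S. sext n s k = a"
  proof
    fix k assume k: "k \<in> S"
    have "pfun n d (sext n s k) = pfun n d (sext n s k0)" using L k k0 unfolding S_def by auto
    moreover have "sext n s k \<in> {0..}" "sext n s k0 \<in> {0..}"
      using simplex_bounds[OF assms(1,4)] k k0 unfolding S_def by auto
    ultimately show "sext n s k = a" unfolding a_def using inj_mono[OF mono] by blast
  qed
  have "real (card S) * a = 1" using const_sum[OF eq] sum1 by simp
  moreover have "card S > 0" using fin \<open>S \<noteq> {}\<close> by (simp add: card_gt_0_iff)
  ultimately have a: "a = 1 / real (card S)" by (simp add: field_simps)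
  have "uniform_on n s S" unfolding uniform_on_def using eq a by (auto simp: S_def)
  then show ?thesis using \<open>S \<noteq> {}\<close> by (intro exI[of _ S]) (auto simp: S_def)
qed

lemma even_fwd:
  assumes "n \<ge> 2" "even d" "d \<ge> 4" "in_simplex n s" "hzero n d s"
  shows "\<exists>K1 K2. K1 \<subseteq> {1..n} \<and> K2 \<subseteq> {1..n} \<and> K1 \<inter> K2 = {}
            \<and> (K1 \<noteq> {} \<or> K2 \<noteq> {})
            \<and> ((K1 = {} \<and> 1 / real (card K2) > sstar n d \<and> uniform_on n s K2)
               \<or> (K2 = {} \<and> 1 / real (card K1) \<le> sstar n d \<and> uniform_on n s K1)
               \<or> (K1 \<noteq> {} \<and> K2 \<noteq> {} \<and>
                  (\<exists>a b. 0 < a \<and> a < sstar n d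
                     \<and> pfun n d a - pfun n d ((1 - real (card K1) * a) / real (card K2)) = 0
                     \<and> b = (1 - real (card K1) * a) / real (card K2)
                     \<and> sstar n d < b \<and> b \<le> 1
                     \<and> (\<forall>k\<in>K1. sext n s k = a) \<and> (\<forall>k\<in>K2. sext n s k = b)
                     \<and> (\<forall>k\<in>{1..n} - (K1 \<union> K2). sext n s k = 0))))"
proof -
  define t where "t = sstar n d"
  define p where "p = pfun n d"
  define S where "S = {k\<in>{1..n}. sext n s k \<noteq> 0}"
  have tp: "1 / real n \<le> t" "strict_antimono_on {0..t} p" "strict_mono_on {t..} p"
    using sstar_props[OF assms(1-3)] unfolding t_def p_def by auto
  have t0: "t > 0" using tp(1) assms(1) by (smt (verit) divide_pos_pos of_nat_0_less_iff zero_less_numeral less_le_trans)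
  obtain L where L: "\<forall>k\<in>S. p (sext n s k) = L"
    using hzero_iff[OF assms(1)] assms(5) unfolding S_def p_def by blast
  have bnd: "0 < sext n s k \<and> sext n s k \<le> 1" if "k \<in> S" for k
    using simplex_bounds[OF assms(1,4), of k] that unfolding S_def by auto
  have fin: "finite S" unfolding S_def by simp
  have sum1: "sum (sext n s) S = 1" unfolding S_def using supp_sum[OF assms(1)] .
  define K1 where "K1 = {k\<in>S. sext n s k \<le> t}"
  define K2 where "K2 = {k\<in>S. sext n s k > t}"
  have fin1: "finite K1" "finite K2" using fin by (auto simp: K1_def K2_def)
  have un: "S = K1 \<union> K2" "K1 \<inter> K2 = {}" by (auto simp: K1_def K2_def)
  have sub: "K1 \<subseteq> {1..n}" "K2 \<subseteq> {1..n}" by (auto simp: K1_def K2_def S_def)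
  have out: "\<forall>k\<in>{1..n} - (K1 \<union> K2). sext n s k = 0" using un by (auto simp: S_def)
  have sumK: "sum (sext n s) K1 + sum (sext n s) K2 = 1"
    using sum1 un fin1 by (simp add: sum.union_disjoint)
  have e1: "sext n s k = sext n s k'" if "k \<in> K1" "k' \<in> K1" for k k'
  proof -
    have "sext n s k \<in> {0..t}" "sext n s k' \<in> {0..t}" using that bnd[of k] bnd[of k'] by (auto simp: K1_def)
    moreover have "p (sext n s k) = p (sext n s k')" using L that by (auto simp: K1_def)
    ultimately show ?thesis using inj_antimono[OF tp(2)] by blast
  qed
  have e2: "sext n s k = sext n s k'" if "k \<in> K2" "k' \<in> K2" for k k'
  proof -
    have "sext n s k \<in> {t..}" "sext n s k' \<in> {t..}" using that by (auto simp: K2_def)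
    moreover have "p (sext n s k) = p (sext n s k')" using L that by (auto simp: K2_def)
    ultimately show ?thesis using inj_mono[OF tp(3)] by blast
  qed
  have "S \<noteq> {}" using sum1 by auto
  show ?thesis
  proof (cases "K2 = {}")
    case True
    then have "K1 \<noteq> {}" using un \<open>S \<noteq> {}\<close> by auto
    then obtain k0 where k0: "k0 \<in> K1" by blast
    define a where "a = sext n s k0"
    have eq: "\<forall>k\<in>K1. sext n s k = a" using e1 k0 a_def by blast
    have "real (card K1) * a = 1" using const_sum[OF eq] sumK True by simp
    moreover have "card K1 > 0" using fin1 \<open>K1 \<noteq> {}\<close> by (simp add: card_gt_0_iff)
    ultimately have a: "a = 1 / real (card K1)" by (simp add: field_simps)
    have "a \<le> t" using k0 by (simp add: a_def K1_def)
    moreover have "uniform_on n s K1" unfolding uniform_on_def using eq a out True by auto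
    ultimately show ?thesis using sub un \<open>K1 \<noteq> {}\<close> True a
      by (intro exI[of _ K1] exI[of _ K2]) (simp add: t_def)
  next
    case False
    then obtain k2 where k2: "k2 \<in> K2" by blast
    define b where "b = sext n s k2"
    have eqb: "\<forall>k\<in>K2. sext n s k = b" using e2 k2 b_def by blast
    have cK2: "card K2 > 0" using fin1 False by (simp add: card_gt_0_iff)
    have bt: "b > t" "b \<le> 1" using k2 bnd by (auto simp: b_def K2_def)
    show ?thesis
    proof (cases "K1 = {}")
      case True
      have "real (card K2) * b = 1" using const_sum[OF eqb] sumK True by simp
      then have b: "b = 1 / real (card K2)" using cK2 by (simp add: field_simps)
      have "uniform_on n s K2" unfolding uniform_on_def using eqb b out True by auto
      then show ?thesis using sub un False True b bt
        by (intro exI[of _ K1] exI[of _ K2]) (simp add: t_def)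
    next
      case K1ne: False
      then obtain k1 where k1: "k1 \<in> K1" by blast
      define a where "a = sext n s k1"
      have eqa: "\<forall>k\<in>K1. sext n s k = a" using e1 k1 a_def by blast
      have at: "0 < a" "a \<le> t" using k1 bnd by (auto simp: a_def K1_def)
      have pab: "p a = p b" using L k1 k2 un by (auto simp: a_def b_def)
      have "a \<noteq> t"
      proof
        assume "a = t"
        then have "p a < p b" using tp(3) bt unfolding monotone_on_def by auto
        then show False using pab by simp
      qed
      then have "a < t" using at by simp
      have "real (card K1) * a + real (card K2) * b = 1"
        using const_sum[OF eqa] const_sum[OF eqb] sumK by simp
      then have b: "b = (1 - real (card K1) * a) / real (card K2)" using cK2 by (simp add: field_simps)
      have c3: "\<exists>a b. 0 < a \<and> a < sstar n d
                     \<and> pfun n d a - pfun n d ((1 - real (card K1) * a) / real (card K2)) = 0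
                     \<and> b = (1 - real (card K1) * a) / real (card K2)
                     \<and> sstar n d < b \<and> b \<le> 1
                     \<and> (\<forall>k\<in>K1. sext n s k = a) \<and> (\<forall>k\<in>K2. sext n s k = b)
                     \<and> (\<forall>k\<in>{1..n} - (K1 \<union> K2). sext n s k = 0)"
        apply (rule exI[of _ a], rule exI[of _ b])
        using out eqa eqb \<open>a < t\<close> at bt pab b unfolding t_def p_def by simp
      show ?thesis
        apply (rule exI[of _ K1], rule exI[of _ K2])
        using sub un K1ne False c3 by blast
    qed
  qed
qed

lemma uniform_zero:
  assumes "n \<ge> 2" "uniform_on n s K"
  shows "hzero n d s"
  unfolding hzero_iff[OF assms(1)]
  using assms(2) unfolding uniform_on_def
  by (intro exI[of _ "pfun n d (1 / real (card K))"]) auto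

lemma pfun_2: "pfun n 2 x = real n + 1"
  by (simp add: pfun_def)

lemma even_bwd:
  assumes "n \<ge> 2"
    and H: "(K1 = {} \<and> 1 / real (card K2) > sstar n d \<and> uniform_on n s K2)
               \<or> (K2 = {} \<and> 1 / real (card K1) \<le> sstar n d \<and> uniform_on n s K1)
               \<or> (K1 \<noteq> {} \<and> K2 \<noteq> {} \<and>
                  (\<exists>a b. 0 < a \<and> a < sstar n d
                     \<and> pfun n d a - pfun n d ((1 - real (card K1) * a) / real (card K2)) = 0
                     \<and> b = (1 - real (card K1) * a) / real (card K2)
                     \<and> sstar n d < b \<and> b \<le> 1
                     \<and> (\<forall>k\<in>K1. sext n s k = a) \<and> (\<forall>k\<in>K2. sext n s k = b)
                     \<and> (\<forall>k\<in>{1..n} - (K1 \<union> K2). sext n s k = 0)))"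
  shows "hzero n d s"
proof -
  from H show ?thesis
  proof (elim disjE conjE)
    assume "uniform_on n s K2" then show ?thesis using uniform_zero[OF assms(1)] by blast
  next
    assume "uniform_on n s K1" then show ?thesis using uniform_zero[OF assms(1)] by blast
  next
    assume "\<exists>a b. 0 < a \<and> a < sstar n d
                     \<and> pfun n d a - pfun n d ((1 - real (card K1) * a) / real (card K2)) = 0
                     \<and> b = (1 - real (card K1) * a) / real (card K2)
                     \<and> sstar n d < b \<and> b \<le> 1
                     \<and> (\<forall>k\<in>K1. sext n s k = a) \<and> (\<forall>k\<in>K2. sext n s k = b)
                     \<and> (\<forall>k\<in>{1..n} - (K1 \<union> K2). sext n s k = 0)"
    then obtain a b where ab: "pfun n d a - pfun n d b = 0"
      "\<forall>k\<in>K1. sext n s k = a" "\<forall>k\<in>K2. sext n s k = b"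
      "\<forall>k\<in>{1..n} - (K1 \<union> K2). sext n s k = 0" by blast
    show ?thesis unfolding hzero_iff[OF assms(1)]
    proof (rule exI[of _ "pfun n d a"], intro ballI impI)
      fix k assume k: "k \<in> {1..n}" "sext n s k \<noteq> 0"
      show "pfun n d (sext n s k) = pfun n d a"
      proof (cases "k \<in> K1")
        case True then show ?thesis using ab by simp
      next
        case False
        then have "k \<in> K2" using ab(4) k by blast
        then show ?thesis using ab by simp
      qed
    qed
  qed
qed

lemma even_iff:
  assumes "n \<ge> 2" "even d" "d \<ge> 4" "in_simplex n s"
  shows "hzero n d s \<longleftrightarrow>
          (\<exists>K1 K2. K1 \<subseteq> {1..n} \<and> K2 \<subseteq> {1..n} \<and> K1 \<inter> K2 = {}
            \<and> (K1 \<noteq> {} \<or> K2 \<noteq> {})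
            \<and> ((K1 = {} \<and> 1 / real (card K2) > sstar n d \<and> uniform_on n s K2)
               \<or> (K2 = {} \<and> 1 / real (card K1) \<le> sstar n d \<and> uniform_on n s K1)
               \<or> (K1 \<noteq> {} \<and> K2 \<noteq> {} \<and>
                  (\<exists>a b. 0 < a \<and> a < sstar n d
                     \<and> pfun n d a - pfun n d ((1 - real (card K1) * a) / real (card K2)) = 0
                     \<and> b = (1 - real (card K1) * a) / real (card K2)
                     \<and> sstar n d < b \<and> b \<le> 1
                     \<and> (\<forall>k\<in>K1. sext n s k = a) \<and> (\<forall>k\<in>K2. sext n s k = b)
                     \<and> (\<forall>k\<in>{1..n} - (K1 \<union> K2). sext n s k = 0)))))" (is "_ \<longleftrightarrow> ?R")
proof
  assume "hzero n d s"
  then show ?R by (rule even_fwd[OF assms])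
next
  assume ?R
  then show "hzero n d s"
    by (elim exE conjE) (erule even_bwd[OF assms(1)])
qed

theorem mainTheorem5:
  fixes n d :: nat
  assumes "n \<ge> 2" and "d \<ge> 2"
  shows
   "(\<forall>s. in_simplex n s \<and> (\<exists>K. K \<noteq> {} \<and> K \<subseteq> {1..n} \<and> uniform_on n s K)
        \<longrightarrow> hzero n d s)
  \<and> (d = 2 \<longrightarrow> (\<forall>s. hzero n d s))
  \<and> (odd d \<longrightarrow> (\<forall>s. in_simplex n s \<and> hzero n d s
        \<longrightarrow> (\<exists>K. K \<noteq> {} \<and> K \<subseteq> {1..n} \<and> uniform_on n s K)))
  \<and> (even d \<and> d \<ge> 4 \<longrightarrow> (\<forall>s. in_simplex n s \<longrightarrow>
        (hzero n d s \<longleftrightarrow>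
          (\<exists>K1 K2. K1 \<subseteq> {1..n} \<and> K2 \<subseteq> {1..n} \<and> K1 \<inter> K2 = {}
            \<and> (K1 \<noteq> {} \<or> K2 \<noteq> {})
            \<and> ((K1 = {} \<and> 1 / real (card K2) > sstar n d \<and> uniform_on n s K2)
               \<or> (K2 = {} \<and> 1 / real (card K1) \<le> sstar n d \<and> uniform_on n s K1)
               \<or> (K1 \<noteq> {} \<and> K2 \<noteq> {} \<and>
                  (\<exists>a b. 0 < a \<and> a < sstar n d
                     \<and> pfun n d a - pfun n d ((1 - real (card K1) * a) / real (card K2)) = 0
                     \<and> b = (1 - real (card K1) * a) / real (card K2)
                     \<and> sstar n d < b \<and> b \<le> 1
                     \<and> (\<forall>k\<in>K1. sext n s k = a) \<and> (\<forall>k\<in>K2. sext n s k = b)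
                     \<and> (\<forall>k\<in>{1..n} - (K1 \<union> K2). sext n s k = 0))))))))"
  apply (intro conjI allI impI)
  subgoal using uniform_zero[OF assms(1)] by (elim conjE exE)
  subgoal unfolding hzero_iff[OF assms(1)] using pfun_2 by blast
  subgoal by (rule odd_case[OF assms(1,2)]) auto
  subgoal by (rule even_iff[OF assms(1)]) auto
  done

end
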